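(* Let $R$ be an associative unital division ring over a field $F$ of characteristic $0$ and let $\theta_{l,m}\in R$ be invertible for all $(l,m)\in\mathbb{Z}^2$. For $\lambda\in F$ define $$\mathcal{L}_{l,m}=\begin{pmatrix}\theta_{l,m+1}\theta_{l,m}^{-1} & \lambda\\ \lambda & \theta_{l,m+1}^{-1}\theta_{l,m}\end{pmatrix},\qquad \mathcal{M}_{l,m}=\begin{pmatrix}\theta_{l+1,m}\theta_{l,m}^{-1} & \lambda\\ \lambda & \theta_{l+1,m}^{-1}\theta_{l,m}\end{pmatrix}.$$ If the compatibility condition $\mathcal{L}_{l+1,m}\mathcal{M}_{l,m}=\mathcal{M}_{l,m+1}\mathcal{L}_{l,m}$ of the system $\Psi_{l,m+1}=\mathcal{L}_{l,m}\Psi_{l,m}$, $\Psi_{l+1,m}=\mathcal{M}_{l,m}\Psi_{l,m}$ holds for all $(l,m)\in\mathbb{Z}^2$ and all $\lambda\in F$, then for all $(l,m)$ $$\theta_{l+1,m+1}^{-1}\theta_{l+1,m}-\theta_{l+1,m+1}^{-1}\theta_{l,m+1}=\theta_{l,m+1}\theta_{l,m}^{-1}-\theta_{l+1,m}\theta_{l,m}^{-1}.$$ *)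

theory Defs
  imports "HOL-Analysis.Analysis"
begin

definition mat2 :: "'a::zero \<Rightarrow> 'a \<Rightarrow> 'a \<Rightarrow> 'a \<Rightarrow> 'a^2^2" where
  "mat2 a b c d = (\<chi> i j. if i = 1 then (if j = 1 then a else b)
                                    else (if j = 1 then c else d))"

text \<open>R is a unital associative algebra over the field F, given by its structure
  map emb : F -> R, a unital ring homomorphism with central image.\<close>
definition algebra_map :: "('f::field \<Rightarrow> 'a::ring_1) \<Rightarrow> bool" where
  "algebra_map emb \<longleftrightarrow> emb 0 = 0 \<and> emb 1 = 1
     \<and> (\<forall>x y. emb (x + y) = emb x + emb y)
     \<and> (\<forall>x y. emb (x * y) = emb x * emb y)
     \<and> (\<forall>c r. emb c * r = r * emb c)"

end

theory Submission
  imports Defs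
begin

lemma entry21: "((A::'a::semiring_1^2^2) ** B) $ 2 $ 1 = A$2$1 * B$1$1 + A$2$2 * B$2$1"
  by (simp add: matrix_matrix_mult_def UNIV_2)

lemma mat2_21: "mat2 a b c d $ 2 $ 1 = c" and mat2_22: "mat2 a b c d $ 2 $ 2 = d"
  and mat2_11: "mat2 a b c d $ 1 $ 1 = a" and mat2_12: "mat2 a b c d $ 1 $ 2 = b"
  by (simp_all add: mat2_def)

theorem proposition5p2:
  fixes emb :: "'f::field_char_0 \<Rightarrow> 'a::division_ring"
    and \<theta> :: "int \<Rightarrow> int \<Rightarrow> 'a"
    and L M :: "'f \<Rightarrow> int \<Rightarrow> int \<Rightarrow> 'a^2^2"
  assumes alg: "algebra_map emb"
    and inv: "\<And>l m. \<theta> l m \<noteq> 0"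
    and L_def: "\<And>lam l m. L lam l m =
        mat2 (\<theta> l (m+1) * inverse (\<theta> l m)) (emb lam)
             (emb lam) (inverse (\<theta> l (m+1)) * \<theta> l m)"
    and M_def: "\<And>lam l m. M lam l m =
        mat2 (\<theta> (l+1) m * inverse (\<theta> l m)) (emb lam)
             (emb lam) (inverse (\<theta> (l+1) m) * \<theta> l m)"
    and compat: "\<And>lam l m. L lam (l+1) m ** M lam l m = M lam l (m+1) ** L lam l m"
  shows "\<forall>l m. inverse (\<theta> (l+1) (m+1)) * \<theta> (l+1) m
              - inverse (\<theta> (l+1) (m+1)) * \<theta> l (m+1)
            = \<theta> l (m+1) * inverse (\<theta> l m) - \<theta> (l+1) m * inverse (\<theta> l m)"
proof (intro allI)
  fix l m
  have e1: "emb 1 = 1" using alg by (simp add: algebra_map_def)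
  have "(L 1 (l+1) m ** M 1 l m) $ 2 $ 1 = (M 1 l (m+1) ** L 1 l m) $ 2 $ 1"
    using compat by simp
  hence "\<theta> (l+1) m * inverse (\<theta> l m) + inverse (\<theta> (l+1) (m+1)) * \<theta> (l+1) m
       = \<theta> l (m+1) * inverse (\<theta> l m) + inverse (\<theta> (l+1) (m+1)) * \<theta> l (m+1)"
    unfolding entry21 L_def M_def mat2_21 mat2_22 mat2_11 e1 by (simp add: add_ac)
  thus "inverse (\<theta> (l+1) (m+1)) * \<theta> (l+1) m
              - inverse (\<theta> (l+1) (m+1)) * \<theta> l (m+1)
            = \<theta> l (m+1) * inverse (\<theta> l m) - \<theta> (l+1) m * inverse (\<theta> l m)"
    by (simp add: algebra_simps)
qed

end
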